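(* Let $\mathcal{G}=(\mathcal{V},\mathcal{E})$ be a finite connected graph with an arbitrary orientation and incidence matrix $\Omega$. Let $q\ge1$ and $\mu,\nu\in\mathcal{P}(\mathcal{V})$. Then $$V_q(\mu,\nu)=\inf\Big\{\mathcal{I}_q(v,g):\ v:[0,1]\to\mathbb{R}^{\mathcal{E}},\ g:[0,1]\to\mathcal{P}(\mathcal{E})\text{ measurable},\ \Omega\cdot\int_0^1 g(t)v(t)\,dt=\nu-\mu\Big\},$$ where $g(t)v(t)$ is the componentwise product.
   Context: For a finite graph $\mathcal{G}=(\mathcal{V},\mathcal{E})$ whose edges have been given an orientation, each edge $k$ goes from $\lfloor k\rfloor$ to $\lceil k\rceil$. The incidence matrix $\Omega=(\omega_{x,k})$ has $\omega_{x,k}=1$ if $x=\lceil k\rceil$, $\omega_{x,k}=-1$ if $x=\lfloor k\rfloor$, and $0$ otherwise. $\mathcal{P}(\mathcal{V})$ and $\mathcal{P}(\mathcal{E})$ denote probability vectors on $\mathcal{V}$ and on $\mathcal{E}$. A triple $(f,v,g)$ consists of an absolutely continuous $f:[0,1]\to\mathcal{P}(\mathcal{V})$, a measurable $v:[0,1]\to\mathbb{R}^{\mathcal{E}}$ and a measurable $g:[0,1]\to\mathcal{P}(\mathcal{E})$. The discrete transport equation $\partial_tf=\Omega\cdot(vg)$ means $\partial_t f(t)_x=\sum_k\omega_{x,k}v(t)_kg(t)_k$ for a.e. $t$ and all $x$. For $q\ge1$, $\mathcal{I}_q(v,g)=\big(\int_0^1\sum_{k\in\mathcal{E}}g(t)_k|v(t)_k|^qdt\big)^{1/q}$.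 $V_q(\mu,\nu)$ denotes the infimum of $\mathcal{I}_q(v,g)$ over all triples satisfying the transport equation with $f(0)=\mu$ and $f(1)=\nu$. *)

theory Defs
  imports "HOL-Analysis.Analysis"
begin

definition omega :: "('e \<Rightarrow> 'v) \<Rightarrow> ('e \<Rightarrow> 'v) \<Rightarrow> 'v \<Rightarrow> 'e \<Rightarrow> real" where
  "omega tail head x k = (if x = head k then 1 else 0) - (if x = tail k then 1 else 0)"

definition graph_connected :: "'v set \<Rightarrow> 'e set \<Rightarrow> ('e \<Rightarrow> 'v) \<Rightarrow> ('e \<Rightarrow> 'v) \<Rightarrow> bool" where
  "graph_connected V E tail head \<longleftrightarrow>
     (\<forall>x\<in>V. \<forall>y\<in>V. (\<lambda>a b. \<exists>k\<in>E. (tail k = a \<and> head k = b) \<or> (tail k = b \<and> head k = a))\<^sup>*\<^sup>* x y)"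

definition prob_vec :: "'a set \<Rightarrow> ('a \<Rightarrow> real) \<Rightarrow> bool" where
  "prob_vec A p \<longleftrightarrow> (\<forall>x\<in>A. 0 \<le> p x) \<and> (\<Sum>x\<in>A. p x) = 1"

definition abs_cont_on :: "real set \<Rightarrow> (real \<Rightarrow> real) \<Rightarrow> bool" where
  "abs_cont_on S h \<longleftrightarrow>
     (\<forall>\<epsilon>>0. \<exists>\<delta>>0. \<forall>(n::nat) (a::nat \<Rightarrow> real) b.
        (\<forall>i<n. a i \<le> b i \<and> {a i..b i} \<subseteq> S) \<and>
        (\<forall>i<n. \<forall>j<n. i \<noteq> j \<longrightarrow> b i \<le> a j \<or> b j \<le> a i) \<and>
        (\<Sum>i<n. b i - a i) < \<delta>
        \<longrightarrow> (\<Sum>i<n. \<bar>h (b i) - h (a i)\<bar>) < \<epsilon>)"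

definition Iq :: "'e set \<Rightarrow> real \<Rightarrow> (real \<Rightarrow> 'e \<Rightarrow> real) \<Rightarrow> (real \<Rightarrow> 'e \<Rightarrow> real) \<Rightarrow> ennreal" where
  "Iq E q v g =
    (let J = (\<integral>\<^sup>+ t. ennreal (\<Sum>k\<in>E. g t k * \<bar>v t k\<bar> powr q) \<partial>(lebesgue_on {0..1}))
     in if J = \<infinity> then \<infinity> else ennreal (enn2real J powr (1 / q)))"

definition admissible_vg :: "'e set \<Rightarrow> (real \<Rightarrow> 'e \<Rightarrow> real) \<Rightarrow> (real \<Rightarrow> 'e \<Rightarrow> real) \<Rightarrow> bool" where
  "admissible_vg E v g \<longleftrightarrow>
     (\<forall>k\<in>E. (\<lambda>t. v t k) \<in> borel_measurable (lebesgue_on {0..1})) \<and>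
     (\<forall>k\<in>E. (\<lambda>t. g t k) \<in> borel_measurable (lebesgue_on {0..1})) \<and>
     (\<forall>t\<in>{0..1}. prob_vec E (g t))"

definition transport_triple ::
  "'v set \<Rightarrow> 'e set \<Rightarrow> ('e \<Rightarrow> 'v) \<Rightarrow> ('e \<Rightarrow> 'v) \<Rightarrow>
   (real \<Rightarrow> 'v \<Rightarrow> real) \<Rightarrow> (real \<Rightarrow> 'e \<Rightarrow> real) \<Rightarrow> (real \<Rightarrow> 'e \<Rightarrow> real) \<Rightarrow> bool" where
  "transport_triple V E tail head f v g \<longleftrightarrow>
     (\<forall>x\<in>V. abs_cont_on {0..1} (\<lambda>t. f t x)) \<and>
     (\<forall>t\<in>{0..1}. prob_vec V (f t)) \<and>
     admissible_vg E v g \<and>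
     (AE t in lebesgue_on {0..1}. \<forall>x\<in>V.
        ((\<lambda>s. f s x) has_real_derivative (\<Sum>k\<in>E. omega tail head x k * v t k * g t k)) (at t))"

definition Vq :: "'v set \<Rightarrow> 'e set \<Rightarrow> ('e \<Rightarrow> 'v) \<Rightarrow> ('e \<Rightarrow> 'v) \<Rightarrow> real \<Rightarrow>
                  ('v \<Rightarrow> real) \<Rightarrow> ('v \<Rightarrow> real) \<Rightarrow> ennreal" where
  "Vq V E tail head q \<mu> \<nu> =
     Inf {Iq E q v g | f v g. transport_triple V E tail head f v g \<and>
                              (\<forall>x\<in>V. f 0 x = \<mu> x) \<and> (\<forall>x\<in>V. f 1 x = \<nu> x)}"

end

theory Submission
  imports Defs
begin


lemma deriv_approx:
  fixes f :: "real \<Rightarrow> real"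
  assumes "(f has_real_derivative D) (at x)" "e > 0"
  obtains r where "r > 0" "\<And>y. \<bar>y - x\<bar> < r \<Longrightarrow> \<bar>f y - f x - D * (y - x)\<bar> \<le> e * \<bar>y - x\<bar>"
proof -
  have "(f has_derivative (\<lambda>h. h * D)) (at x)"
    using assms(1) by (simp add: has_field_derivative_def mult.commute[of _ D])
  then have "\<exists>d>0. \<forall>y. norm(y - x) < d \<longrightarrow> norm (f y - f x - (y - x) * D) \<le> e * norm (y - x)"
    unfolding has_derivative_at_alt using assms(2) by blast
  then show ?thesis using that by (auto simp: mult.commute)
qed

lemma intervals_ordered:
  fixes a1 b1 a2 b2 :: real
  assumes "a1 < b1" "a2 < b2" "{a1<..<b1} \<inter> {a2<..<b2} = {}"
  shows "b1 \<le> a2 \<or> b2 \<le> a1"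
proof (rule ccontr)
  assume "\<not> ?thesis"
  then have "max a1 a2 < min b1 b2" using assms by auto
  then have "(max a1 a2 + min b1 b2)/2 \<in> {a1<..<b1} \<inter> {a2<..<b2}" by auto
  with assms(3) show False by blast
qed

lemma tagged_real_piece:
  assumes "p tagged_division_of {a..b::real}" "(x, K) \<in> p"
  obtains u v where "K = {u..v}" "u \<le> x" "x \<le> v" "a \<le> u" "v \<le> b"
    "Inf K = u" "Sup K = v" "Henstock_Kurzweil_Integration.content K = v - u" "interior K = {u<..<v}"
proof -
  from tagged_division_ofD(4)[OF assms] obtain u v where K: "K = cbox u v" by blast
  then have K': "K = {u..v}" by simp
  have "x \<in> K" using tagged_division_ofD(2)[OF assms] .
  then have "u \<le> x" "x \<le> v" using K' by auto
  moreover have "K \<subseteq> {a..b}" using tagged_division_ofD(3)[OF assms] .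
  then have "a \<le> u" "v \<le> b" using K' \<open>u \<le> x\<close> \<open>x \<le> v\<close> by auto
  ultimately show ?thesis using that K' by auto
qed


lemma ftc_ac:
  fixes f h :: "real \<Rightarrow> real"
  assumes ac: "abs_cont_on {0..1} f"
    and der: "AE t in lebesgue_on {0..1}. (f has_real_derivative h t) (at t)"
    and int: "integrable (lebesgue_on {0..1}) h"
  shows "f 1 - f 0 = (\<integral>t. h t \<partial>lebesgue_on {0..1})"
proof -
  from der obtain N where N: "N \<in> null_sets (lebesgue_on {0..1})"
    and NP: "{t \<in> space (lebesgue_on {0..1}). \<not> (f has_real_derivative h t) (at t)} \<subseteq> N"
    using AE_E[OF der] by (metis null_setsI)
  have "N \<in> null_sets lebesgue"
    using N by (simp add: null_sets_restrict_space)
  then have negN: "negligible N"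
    using negligible_iff_null_sets by blast
  have derN: "(f has_real_derivative h t) (at t)" if "t \<in> {0..1}" "t \<notin> N" for t
    using NP that by auto
  define h0 where "h0 t = (if t \<in> N then 0 else h t)" for t
  have h0int: "(h0 has_integral (f 1 - f 0)) {0..1}"
    unfolding has_integral_factor_content_real
  proof (intro allI impI)
    fix e :: real assume e: "e > 0"
    then have "e/2 > 0" by simp
    have "\<exists>\<delta>>0. \<forall>(n::nat) (a::nat \<Rightarrow> real) b. (\<forall>i<n. a i \<le> b i \<and> {a i..b i} \<subseteq> {0..1}) \<and>
        (\<forall>i<n. \<forall>j<n. i \<noteq> j \<longrightarrow> b i \<le> a j \<or> b j \<le> a i) \<and>
        (\<Sum>i<n. b i - a i) < \<delta>
        \<longrightarrow> (\<Sum>i<n. \<bar>f (b i) - f (a i)\<bar>) < e/2"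
      using ac \<open>e/2 > 0\<close> unfolding abs_cont_on_def by blast
    then obtain \<delta> where "\<delta> > 0" and acd: "\<forall>(n::nat) (a::nat \<Rightarrow> real) b. (\<forall>i<n. a i \<le> b i \<and> {a i..b i} \<subseteq> {0..1}) \<and>
        (\<forall>i<n. \<forall>j<n. i \<noteq> j \<longrightarrow> b i \<le> a j \<or> b j \<le> a i) \<and>
        (\<Sum>i<n. b i - a i) < \<delta>
        \<longrightarrow> (\<Sum>i<n. \<bar>f (b i) - f (a i)\<bar>) < e/2"
      by blast
    have "N \<in> sets lebesgue" using negN negligible_imp_sets by blast
    from sets_lebesgue_outer_open[OF this \<open>\<delta> > 0\<close>] obtain T where
      T: "open T" "N \<subseteq> T" "T - N \<in> lmeasurable" "emeasure lebesgue (T - N) < ennreal \<delta>"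
      by blast
    have Tmeas: "T \<in> lmeasurable" and mT: "measure lebesgue T < \<delta>"
    proof -
      have "negligible ((T - N) - T \<union> (T - (T - N)))"
        using negN by (rule negligible_subset) auto
      then have "measure lebesgue T = measure lebesgue (T - N)"
        using measure_negligible_symdiff[OF T(3)] by blast
      moreover have "measure lebesgue (T - N) < \<delta>"
        using T(3,4) \<open>\<delta> > 0\<close> by (simp add: emeasure_eq_measure2 ennreal_less_iff)
      ultimately show "measure lebesgue T < \<delta>" by simp
      have "T = (T - N) \<union> N" using T(2) by blast
      then show "T \<in> lmeasurable"
        using T(3) negN by (metis fmeasurable.Un negligible_imp_measurable)
    qed
    have "\<forall>x. \<exists>r>0. x \<in> {0..1} \<longrightarrow> x \<notin> N \<longrightarrow>
       (\<forall>y. \<bar>y - x\<bar> < r \<longrightarrow> \<bar>f y - f x - h x * (y - x)\<bar> \<le> e/2 * \<bar>y - x\<bar>)"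
    proof
      fix x
      show "\<exists>r>0. x \<in> {0..1} \<longrightarrow> x \<notin> N \<longrightarrow>
       (\<forall>y. \<bar>y - x\<bar> < r \<longrightarrow> \<bar>f y - f x - h x * (y - x)\<bar> \<le> e/2 * \<bar>y - x\<bar>)"
      proof (cases "x \<in> {0..1} \<and> x \<notin> N")
        case True
        then obtain r where "r > 0" "\<And>y. \<bar>y - x\<bar> < r \<Longrightarrow> \<bar>f y - f x - h x * (y - x)\<bar> \<le> e/2 * \<bar>y - x\<bar>"
          using deriv_approx[OF derN \<open>e/2 > 0\<close>] by blast
        then show ?thesis by blast
      next
        case False then show ?thesis by (intro exI[of _ 1]) auto
      qed
    qed
    then obtain r where r: "\<And>x. r x > 0"
      and rP: "\<And>x y. x \<in> {0..1} \<Longrightarrow> x \<notin> N \<Longrightarrow> \<bar>y - x\<bar> < r x \<Longrightarrow>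
           \<bar>f y - f x - h x * (y - x)\<bar> \<le> e/2 * \<bar>y - x\<bar>"
      by metis
    define d where "d x = (if x \<in> N then T else ball x (r x))" for x
    have gd: "gauge d"
      unfolding gauge_def d_def using T(1,2) r by auto
    show "\<exists>d. gauge d \<and> (\<forall>p. p tagged_division_of {0..1} \<and> d fine p \<longrightarrow>
        norm ((\<Sum>(x, k)\<in>p. Henstock_Kurzweil_Integration.content k *\<^sub>R h0 x) - (f 1 - f 0))
        \<le> e * Henstock_Kurzweil_Integration.content {0..1::real})"
    proof (intro exI conjI allI impI)
      show "gauge d" by (rule gd)
      fix p assume "p tagged_division_of {0..1} \<and> d fine p"
      then have p: "p tagged_division_of {0..1}" and fine: "d fine p" by auto
      have finp: "finite p" using p by blast
      define P' where "P' = {(x, K) \<in> p. x \<in> N \<and> Inf K < Sup K}"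
      have finP': "finite P'" using finp unfolding P'_def by (auto intro: finite_subset)
      have sumf: "(\<Sum>(x, K)\<in>p. f (Sup K) - f (Inf K)) = f 1 - f 0"
        using additive_tagged_division_1[OF _ p] by simp
      have sumc: "(\<Sum>(x, K)\<in>p. Henstock_Kurzweil_Integration.content K) = 1"
        using additive_content_tagged_division[of p 0 1] p by simp
      have pterm: "\<bar>Henstock_Kurzweil_Integration.content K * h0 x - (f (Sup K) - f (Inf K))\<bar>
          \<le> (if (x, K) \<in> P' then \<bar>f (Sup K) - f (Inf K)\<bar> else 0) + e/2 * Henstock_Kurzweil_Integration.content K"
        if xK: "(x, K) \<in> p" for x K
      proof -
        obtain u v where uv: "K = {u..v}" "u \<le> x" "x \<le> v" "0 \<le> u" "v \<le> 1"
          "Inf K = u" "Sup K = v" "Henstock_Kurzweil_Integration.content K = v - u"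
          using tagged_real_piece[OF p xK] by metis
        have Kd: "K \<subseteq> d x" using fine xK by (auto simp: fine_def)
        show ?thesis
        proof (cases "x \<in> N")
          case True
          have "u < v \<or> u = v" using uv by linarith
          then show ?thesis using True uv e xK unfolding h0_def P'_def by (auto simp: abs_minus_commute)
        next
          case False
          then have Kb: "K \<subseteq> ball x (r x)" using Kd by (simp add: d_def)
          have "u \<in> K" "v \<in> K" using uv by auto
          then have du: "\<bar>u - x\<bar> < r x" and dv: "\<bar>v - x\<bar> < r x"
            using Kb by (auto simp: dist_real_def)
          have x01: "x \<in> {0..1}" using uv by auto
          have A: "\<bar>f u - f x - h x * (u - x)\<bar> \<le> e/2 * \<bar>u - x\<bar>" using rP[OF x01 False du] .
          have B: "\<bar>f v - f x - h x * (v - x)\<bar> \<le> e/2 * \<bar>v - x\<bar>" using rP[OF x01 False dv] .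
          have eq: "(v - u) * h x - (f v - f u) = (f u - f x - h x * (u - x)) - (f v - f x - h x * (v - x))"
            by (simp add: algebra_simps)
          have "\<bar>(v - u) * h x - (f v - f u)\<bar> \<le> \<bar>f u - f x - h x * (u - x)\<bar> + \<bar>f v - f x - h x * (v - x)\<bar>"
            unfolding eq by (rule abs_triangle_ineq4)
          also have "\<dots> \<le> e/2 * \<bar>u - x\<bar> + e/2 * \<bar>v - x\<bar>"
            using A B by (rule add_mono)
          also have "\<dots> = e/2 * (v - u)" using uv by (simp add: abs_if field_simps)
          finally show ?thesis using uv False unfolding h0_def P'_def by auto
        qed
      qed
      have "norm ((\<Sum>(x, k)\<in>p. Henstock_Kurzweil_Integration.content k *\<^sub>R h0 x) - (f 1 - f 0))
          = \<bar>\<Sum>(x, K)\<in>p. Henstock_Kurzweil_Integration.content K * h0 x - (f (Sup K) - f (Inf K))\<bar>"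
        by (simp add: sumf[symmetric] sum_subtractf split_def)
      also have "\<dots> \<le> (\<Sum>(x, K)\<in>p. \<bar>Henstock_Kurzweil_Integration.content K * h0 x - (f (Sup K) - f (Inf K))\<bar>)"
        by (rule order_trans[OF sum_abs]) (simp add: split_def)
      also have "\<dots> \<le> (\<Sum>(x, K)\<in>p. (if (x, K) \<in> P' then \<bar>f (Sup K) - f (Inf K)\<bar> else 0)
            + e/2 * Henstock_Kurzweil_Integration.content K)"
        by (rule sum_mono) (use pterm in auto)
      also have "\<dots> = (\<Sum>(x, K)\<in>P'. \<bar>f (Sup K) - f (Inf K)\<bar>) + e/2"
      proof -
        have "(\<Sum>(x, K)\<in>p. (if (x, K) \<in> P' then \<bar>f (Sup K) - f (Inf K)\<bar> else 0))
            = (\<Sum>(x, K)\<in>P'. \<bar>f (Sup K) - f (Inf K)\<bar>)"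
          by (rule sum.mono_neutral_cong_right[OF finp]) (auto simp: P'_def split: if_splits)
        moreover have "(\<Sum>(x, K)\<in>p. e/2 * Henstock_Kurzweil_Integration.content K) = e/2"
          using sumc by (simp add: split_def sum_distrib_left[symmetric] sum_divide_distrib[symmetric])
        ultimately show ?thesis by (simp add: sum.distrib split_def)
      qed
      also have "\<dots> \<le> e/2 + e/2"
      proof -
        have P'p: "P' \<subseteq> p" unfolding P'_def by auto
        have P'D: "(x, K) \<in> p \<and> x \<in> N \<and> Inf K < Sup K" if "(x, K) \<in> P'" for x K
          using that unfolding P'_def by auto
        have ordered: "Sup K1 \<le> Inf K2 \<or> Sup K2 \<le> Inf K1"
          if "(x1, K1) \<in> P'" "(x2, K2) \<in> P'" "(x1, K1) \<noteq> (x2, K2)" for x1 K1 x2 K2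
        proof -
          have i1: "(x1, K1) \<in> p" "Inf K1 < Sup K1" and i2: "(x2, K2) \<in> p" "Inf K2 < Sup K2"
            using P'D that by auto
          obtain u1 v1 where uv1: "Inf K1 = u1" "Sup K1 = v1" "interior K1 = {u1<..<v1}"
            using tagged_real_piece[OF p i1(1)] by metis
          obtain u2 v2 where uv2: "Inf K2 = u2" "Sup K2 = v2" "interior K2 = {u2<..<v2}"
            using tagged_real_piece[OF p i2(1)] by metis
          have "interior K1 \<inter> interior K2 = {}"
            using tagged_division_ofD(5)[OF p i1(1) i2(1) that(3)] .
          then show ?thesis
            using intervals_ordered[of u1 v1 u2 v2] i1 i2 uv1 uv2 by auto
        qed
        have KT: "K \<subseteq> T" if "(x, K) \<in> P'" for x K
        proof -
          have "K \<subseteq> d x" using fine P'D[OF that] by (auto simp: fine_def)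
          then show ?thesis using P'D[OF that] by (simp add: d_def)
        qed
        have Kiv: "K = {Inf K..Sup K}" if xKP: "(x, K) \<in> P'" for x K
        proof -
          have "(x, K) \<in> p" using P'D[OF xKP] by blast
          from tagged_real_piece[OF p this] obtain u v where "K = {u..v}" "Inf K = u" "Sup K = v"
            by metis
          then show ?thesis by simp
        qed
        have sumlen: "(\<Sum>(x, K)\<in>P'. Sup K - Inf K) < \<delta>"
        proof -
          have "(\<Sum>(x, K)\<in>P'. Sup K - Inf K) = (\<Sum>y\<in>P'. measure lebesgue (snd y))"
          proof (rule sum.cong)
            fix y assume y: "y \<in> P'"
            obtain x K where yK: "y = (x, K)" by force
            have "Inf K \<le> Sup K" using P'D y yK by force
            then have "measure lebesgue {Inf K..Sup K} = Sup K - Inf K" by simp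
            moreover have kk: "K = {Inf K..Sup K}" using Kiv[of x K] y yK by blast
            ultimately have "measure lebesgue K = Sup K - Inf K"
              by metis
            then show "(case y of (x, K) \<Rightarrow> Sup K - Inf K) = measure lebesgue (snd y)"
              using yK by simp
          qed simp
          also have "\<dots> = measure lebesgue (\<Union>(snd ` P'))"
          proof (rule measure_negligible_finite_Union_image[symmetric, OF finP'])
            fix y assume "y \<in> P'"
            then show "snd y \<in> lmeasurable" using Kiv[of "fst y" "snd y"] by (metis prod.collapse lmeasurable_cbox box_real(2))
          next
            show "pairwise (\<lambda>y z. negligible (snd y \<inter> snd z)) P'"
            proof (unfold pairwise_def, intro ballI impI)
              fix y z assume yz: "y \<in> P'" "z \<in> P'" "y \<noteq> z"
              obtain x1 K1 where y: "y = (x1, K1)" by force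
              obtain x2 K2 where z: "z = (x2, K2)" by force
              have a: "(x1, K1) \<in> P'" "(x2, K2) \<in> P'" "(x1, K1) \<noteq> (x2, K2)" using yz y z by auto
              then have o: "Sup K1 \<le> Inf K2 \<or> Sup K2 \<le> Inf K1" using ordered by blast
              have sub: "K1 \<inter> K2 \<subseteq> {Sup K1, Sup K2}"
                using o Kiv[OF a(1)] Kiv[OF a(2)] by (auto; metis atLeastAtMost_iff order.antisym order_trans)
              show "negligible (snd y \<inter> snd z)"
                using negligible_subset[OF _ sub] y z by auto
            qed
          qed
          also have "\<dots> \<le> measure lebesgue T"
          proof (rule measure_mono_fmeasurable)
            show "\<Union>(snd ` P') \<subseteq> T" using KT by force
            show "T \<in> lmeasurable" by (rule Tmeas)
            have "snd ` P' \<subseteq> sets lebesgue"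
            proof
              fix K assume "K \<in> snd ` P'"
              then obtain x where "(x, K) \<in> P'" by force
              then have "K = {Inf K..Sup K}" by (rule Kiv)
              then show "K \<in> sets lebesgue" by (metis lmeasurable_cbox box_real(2) fmeasurableD)
            qed
            then show "\<Union>(snd ` P') \<in> sets lebesgue"
              using finP' by (intro sets.finite_Union) auto
          qed
          finally show ?thesis using mT by linarith
        qed
        obtain \<sigma> where bij: "bij_betw \<sigma> {0..<card P'} P'"
          using ex_bij_betw_nat_finite[OF finP'] by blast
        define n where "n = card P'"
        define a where "a i = Inf (snd (\<sigma> i))" for i
        define b where "b i = Sup (snd (\<sigma> i))" for i
        have sig: "\<sigma> i \<in> P'" if "i < n" for i
          using bij that unfolding n_def bij_betw_def by auto
        have c1: "\<forall>i<n. a i \<le> b i \<and> {a i..b i} \<subseteq> {0..1}"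
        proof (intro allI impI)
          fix i assume "i < n"
          then have "\<sigma> i \<in> P'" by (rule sig)
          then obtain x K where xK: "\<sigma> i = (x, K)" "(x, K) \<in> P'" by (metis prod.collapse)
          then have "(x, K) \<in> p" using P'D by blast
          from tagged_real_piece[OF p this] obtain u v where
            "K = {u..v}" "u \<le> x" "x \<le> v" "0 \<le> u" "v \<le> 1" "Inf K = u" "Sup K = v" by metis
          then show "a i \<le> b i \<and> {a i..b i} \<subseteq> {0..1}" using xK unfolding a_def b_def by auto
        qed
        have c2: "\<forall>i<n. \<forall>j<n. i \<noteq> j \<longrightarrow> b i \<le> a j \<or> b j \<le> a i"
        proof (intro allI impI)
          fix i j assume ij: "i < n" "j < n" "i \<noteq> j"
          then have "\<sigma> i \<noteq> \<sigma> j" using bij unfolding bij_betw_def inj_on_def n_def by auto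
          moreover have "\<sigma> i \<in> P'" "\<sigma> j \<in> P'" using sig ij by auto
          ultimately show "b i \<le> a j \<or> b j \<le> a i"
            using ordered[of "fst (\<sigma> i)" "snd (\<sigma> i)" "fst (\<sigma> j)" "snd (\<sigma> j)"]
            unfolding a_def b_def by auto
        qed
        have c3: "(\<Sum>i<n. b i - a i) < \<delta>"
        proof -
          have "(\<Sum>i<n. b i - a i) = (\<Sum>(x, K)\<in>P'. Sup K - Inf K)"
            unfolding a_def b_def n_def lessThan_atLeast0
            using sum.reindex_bij_betw[OF bij, of "\<lambda>(x, K). Sup K - Inf K"] by (simp add: split_def)
          then show ?thesis using sumlen by simp
        qed
        have "(\<Sum>i<n. \<bar>f (b i) - f (a i)\<bar>) < e/2"
          using acd c1 c2 c3 by blast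
        moreover have "(\<Sum>i<n. \<bar>f (b i) - f (a i)\<bar>) = (\<Sum>(x, K)\<in>P'. \<bar>f (Sup K) - f (Inf K)\<bar>)"
          unfolding a_def b_def n_def lessThan_atLeast0
          using sum.reindex_bij_betw[OF bij, of "\<lambda>(x, K). \<bar>f (Sup K) - f (Inf K)\<bar>"] by (simp add: split_def)
        ultimately have "(\<Sum>(x, K)\<in>P'. \<bar>f (Sup K) - f (Inf K)\<bar>) < e/2" by simp
        then show ?thesis by simp
      qed
      finally show "norm ((\<Sum>(x, k)\<in>p. Henstock_Kurzweil_Integration.content k *\<^sub>R h0 x) - (f 1 - f 0))
        \<le> e * Henstock_Kurzweil_Integration.content {0..1::real}" by simp
    qed
  qed
  have "(h has_integral (f 1 - f 0)) {0..1}"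
    by (rule has_integral_spike[OF negN _ h0int]) (simp add: h0_def)
  moreover have "(h has_integral (\<integral>t. h t \<partial>lebesgue_on {0..1})) {0..1}"
    by (rule has_integral_integral_lebesgue_on[OF int]) simp
  ultimately show ?thesis using has_integral_unique by blast
qed



lemma tangent_powr:
  fixes x a q :: real
  assumes "x \<ge> 0" "a > 0" "q \<ge> 1"
  shows "x powr q \<ge> a powr q + q * a powr (q - 1) * (x - a)"
proof (cases "x = 0")
  case True
  have "a powr q = a * a powr (q - 1)" using assms by (simp add: powr_diff)
  then have "a powr q + q * a powr (q - 1) * (x - a) = (1 - q) * a powr q"
    using True by (simp add: algebra_simps)
  also have "\<dots> \<le> 0" using assms by (simp add: mult_nonpos_nonneg)
  finally show ?thesis using True by simp
next
  case False
  then have x: "x \<in> {0<..}" using assms by simp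
  have "(\<lambda>x. x powr q) x - a powr q \<ge> (q * a powr (q - 1)) * (x - a)"
  proof (rule convex_on_imp_above_tangent[OF powr_convex[OF assms(3)]])
    show "connected {0::real<..}" by simp
    show "a \<in> interior {0<..}" using assms by (simp add: interior_open)
    show "x \<in> {0<..}" by (rule x)
    show "((\<lambda>x. x powr q) has_real_derivative q * a powr (q - 1)) (at a within {0<..})"
      using assms by (auto intro!: derivative_eq_intros)
  qed
  then show ?thesis by simp
qed


lemma jensen_edge:
  fixes M :: "real measure" and g w :: "real \<Rightarrow> real" and q :: real
  assumes g0: "\<And>t. t \<in> space M \<Longrightarrow> g t \<ge> 0" and w0: "\<And>t. t \<in> space M \<Longrightarrow> w t \<ge> 0"
    and ig: "integrable M g" and igw: "integrable M (\<lambda>t. g t * w t)"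
    and igwq: "integrable M (\<lambda>t. g t * w t powr q)"
    and q: "q \<ge> 1" and G: "(\<integral>t. g t \<partial>M) > 0"
  shows "(\<integral>t. g t \<partial>M) * ((\<integral>t. g t * w t \<partial>M) / (\<integral>t. g t \<partial>M)) powr q
         \<le> (\<integral>t. g t * w t powr q \<partial>M)"
proof -
  define G where "G = (\<integral>t. g t \<partial>M)"
  define M0 where "M0 = (\<integral>t. g t * w t \<partial>M)"
  define a where "a = M0 / G"
  have M0: "M0 \<ge> 0" unfolding M0_def using g0 w0 by (intro integral_nonneg_AE) (auto intro!: AE_I2)
  have R0: "(\<integral>t. g t * w t powr q \<partial>M) \<ge> 0" using g0 by (intro integral_nonneg_AE) (auto intro!: AE_I2)
  have Gpos: "G > 0" using G unfolding G_def .
  show ?thesis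
  proof (cases "M0 = 0")
    case True
    then show ?thesis using R0 q unfolding G_def[symmetric] M0_def[symmetric] by simp
  next
    case False
    then have apos: "a > 0" using M0 Gpos unfolding a_def by simp
    have pw: "g t * w t powr q \<ge> a powr q * g t + (q * a powr (q - 1)) * (g t * w t) - (q * a powr (q - 1) * a) * g t"
      if "t \<in> space M" for t
    proof -
      have "w t powr q \<ge> a powr q + q * a powr (q - 1) * (w t - a)"
        using tangent_powr[OF w0[OF that] apos q] .
      then have "g t * w t powr q \<ge> g t * (a powr q + q * a powr (q - 1) * (w t - a))"
        using g0[OF that] by (rule mult_left_mono)
      then show ?thesis by (simp add: algebra_simps)
    qed
    have "(\<integral>t. g t * w t powr q \<partial>M) \<ge>
        (\<integral>t. a powr q * g t + (q * a powr (q - 1)) * (g t * w t) - (q * a powr (q - 1) * a) * g t \<partial>M)"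
      using pw by (intro integral_mono) (auto intro!: Bochner_Integration.integrable_diff Bochner_Integration.integrable_add integrable_mult_right ig igw igwq)
    also have "(\<integral>t. a powr q * g t + (q * a powr (q - 1)) * (g t * w t) - (q * a powr (q - 1) * a) * g t \<partial>M)
        = a powr q * G + (q * a powr (q - 1)) * M0 - (q * a powr (q - 1) * a) * G"
    proof -
      have i1: "integrable M (\<lambda>t. a powr q * g t)" using ig by simp
      have i2: "integrable M (\<lambda>t. (q * a powr (q - 1)) * (g t * w t))" using igw by simp
      have i3: "integrable M (\<lambda>t. (q * a powr (q - 1) * a) * g t)" using ig by simp
      show ?thesis
        using Bochner_Integration.integral_diff[OF Bochner_Integration.integrable_add[OF i1 i2] i3] Bochner_Integration.integral_add[OF i1 i2] by (simp add: G_def M0_def)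
    qed
    also have "(q * a powr (q - 1)) * M0 = (q * a powr (q - 1) * a) * G"
      using Gpos unfolding a_def by simp
    finally have "(\<integral>t. g t * w t powr q \<partial>M) \<ge> a powr q * G" by simp
    then show ?thesis unfolding G_def[symmetric] M0_def[symmetric] a_def by (simp add: mult.commute)
  qed
qed



lemma L_space[simp]: "space (lebesgue_on {0..1::real}) = {0..1}" by simp
lemma L_finite: "finite_measure (lebesgue_on {0..1::real})"
  by (rule finite_measure_lebesgue_on) simp
lemma L_emeasure: "emeasure (lebesgue_on {0..1::real}) {0..1} = 1"
  by (simp add: emeasure_restrict_space)
lemma L_measure: "measure (lebesgue_on {0..1::real}) {0..1} = 1"
  by (simp add: measure_restrict_space)
lemma L_integral_const[simp]: "(\<integral>t. c \<partial>lebesgue_on {0..1::real}) = (c::real)"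
  using L_measure by simp
lemma L_nn_integral_const[simp]: "(\<integral>\<^sup>+t. c \<partial>lebesgue_on {0..1::real}) = c"
  using L_emeasure by (simp add: nn_integral_const)

lemma abs_cont_linear: "abs_cont_on S (\<lambda>t. a + t * c)"
  unfolding abs_cont_on_def
proof (intro allI impI)
  fix e :: real assume e: "e > 0"
  show "\<exists>\<delta>>0. \<forall>(n::nat) (a' :: nat \<Rightarrow> real) b. (\<forall>i<n. a' i \<le> b i \<and> {a' i..b i} \<subseteq> S) \<and>
        (\<forall>i<n. \<forall>j<n. i \<noteq> j \<longrightarrow> b i \<le> a' j \<or> b j \<le> a' i) \<and> (\<Sum>i<n. b i - a' i) < \<delta> \<longrightarrow>
        (\<Sum>i<n. \<bar>a + b i * c - (a + a' i * c)\<bar>) < e"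
  proof (intro exI[of _ "e / (\<bar>c\<bar> + 1)"] conjI allI impI)
    show "e / (\<bar>c\<bar> + 1) > 0" using e by simp
    fix n :: nat and a' b :: "nat \<Rightarrow> real"
    assume H: "(\<forall>i<n. a' i \<le> b i \<and> {a' i..b i} \<subseteq> S) \<and>
        (\<forall>i<n. \<forall>j<n. i \<noteq> j \<longrightarrow> b i \<le> a' j \<or> b j \<le> a' i) \<and> (\<Sum>i<n. b i - a' i) < e / (\<bar>c\<bar> + 1)"
    have "(\<Sum>i<n. \<bar>a + b i * c - (a + a' i * c)\<bar>) = (\<Sum>i<n. \<bar>c\<bar> * (b i - a' i))"
    proof (rule sum.cong)
      fix i assume "i \<in> {..<n}"
      then have "a' i \<le> b i" using H by auto
      have "a + b i * c - (a + a' i * c) = c * (b i - a' i)" by (simp add: algebra_simps)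
      then show "\<bar>a + b i * c - (a + a' i * c)\<bar> = \<bar>c\<bar> * (b i - a' i)"
        using \<open>a' i \<le> b i\<close> by (simp add: abs_mult)
    qed simp
    also have "\<dots> = \<bar>c\<bar> * (\<Sum>i<n. b i - a' i)" by (simp add: sum_distrib_left)
    also have "\<dots> \<le> \<bar>c\<bar> * (e / (\<bar>c\<bar> + 1))"
      using H by (intro mult_left_mono) auto
    also have "\<dots> < e"
      using e by (simp add: field_simps)
    finally show "(\<Sum>i<n. \<bar>a + b i * c - (a + a' i * c)\<bar>) < e" .
  qed
qed


lemma adm_g_bounds:
  assumes "finite E" "admissible_vg E v g" "k \<in> E" "t \<in> {0..1}"
  shows "0 \<le> g t k" "g t k \<le> 1"
proof -
  have pv: "prob_vec E (g t)" using assms unfolding admissible_vg_def by auto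
  then show "0 \<le> g t k" using assms unfolding prob_vec_def by auto
  have "g t k \<le> (\<Sum>j\<in>E. g t j)"
    using pv assms by (intro member_le_sum) (auto simp: prob_vec_def)
  then show "g t k \<le> 1" using pv unfolding prob_vec_def by simp
qed

lemma adm_meas:
  assumes "admissible_vg E v g" "k \<in> E"
  shows "(\<lambda>t. g t k) \<in> borel_measurable (lebesgue_on {0..1})"
    "(\<lambda>t. v t k) \<in> borel_measurable (lebesgue_on {0..1})"
  using assms unfolding admissible_vg_def by auto

lemma adm_g_integrable:
  assumes "finite E" "admissible_vg E v g" "k \<in> E"
  shows "integrable (lebesgue_on {0..1}) (\<lambda>t. g t k)"
proof (rule finite_measure.integrable_const_bound[OF L_finite, where B=1])
  show "AE t in lebesgue_on {0..1}. norm (g t k) \<le> 1"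
    using adm_g_bounds[OF assms] by (intro AE_I2) auto
  show "(\<lambda>t. g t k) \<in> borel_measurable (lebesgue_on {0..1})" using adm_meas[OF assms(2,3)] by simp
qed

lemma adm_gvq_meas:
  assumes "admissible_vg E v g" "k \<in> E"
  shows "(\<lambda>t. g t k * \<bar>v t k\<bar> powr q) \<in> borel_measurable (lebesgue_on {0..1})"
proof -
  note [measurable] = adm_meas[OF assms]
  show ?thesis by measurable
qed

lemma Iq_finite:
  assumes fin: "finite E" and adm: "admissible_vg E v g" and fI: "Iq E q v g \<noteq> \<infinity>"
  shows "\<And>k. k \<in> E \<Longrightarrow> integrable (lebesgue_on {0..1}) (\<lambda>t. g t k * \<bar>v t k\<bar> powr q)"
    and "Iq E q v g = ennreal ((\<integral>t. (\<Sum>k\<in>E. g t k * \<bar>v t k\<bar> powr q) \<partial>lebesgue_on {0..1}) powr (1/q))"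
proof -
  let ?L = "lebesgue_on {0..1::real}"
  define J where "J = (\<integral>\<^sup>+ t. ennreal (\<Sum>k\<in>E. g t k * \<bar>v t k\<bar> powr q) \<partial>?L)"
  have JI: "J \<noteq> \<infinity>" using fI unfolding Iq_def J_def Let_def by auto
  have nn: "0 \<le> g t k * \<bar>v t k\<bar> powr q" if "k \<in> E" "t \<in> {0..1}" for k t
    using adm_g_bounds[OF fin adm that] by simp
  show int: "integrable ?L (\<lambda>t. g t k * \<bar>v t k\<bar> powr q)" if k: "k \<in> E" for k
  proof (rule integrableI_bounded)
    show "(\<lambda>t. g t k * \<bar>v t k\<bar> powr q) \<in> borel_measurable ?L" by (rule adm_gvq_meas[OF adm k])
    have "(\<integral>\<^sup>+ t. ennreal (norm (g t k * \<bar>v t k\<bar> powr q)) \<partial>?L) \<le> J"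
      unfolding J_def
    proof (rule nn_integral_mono)
      fix t assume t: "t \<in> space ?L"
      have "norm (g t k * \<bar>v t k\<bar> powr q) = g t k * \<bar>v t k\<bar> powr q" using nn[OF k] t by simp
      also have "\<dots> \<le> (\<Sum>k\<in>E. g t k * \<bar>v t k\<bar> powr q)"
        using nn t k fin by (intro member_le_sum) auto
      finally show "ennreal (norm (g t k * \<bar>v t k\<bar> powr q)) \<le> ennreal (\<Sum>k\<in>E. g t k * \<bar>v t k\<bar> powr q)"
        by (rule ennreal_leI)
    qed
    then show "(\<integral>\<^sup>+ t. ennreal (norm (g t k * \<bar>v t k\<bar> powr q)) \<partial>?L) < \<infinity>"
      using JI by (simp add: less_top order_le_less_trans)
  qed
  have intS: "integrable ?L (\<lambda>t. \<Sum>k\<in>E. g t k * \<bar>v t k\<bar> powr q)"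
    using int by (intro Bochner_Integration.integrable_sum) auto
  have "J = ennreal (\<integral>t. (\<Sum>k\<in>E. g t k * \<bar>v t k\<bar> powr q) \<partial>?L)"
    unfolding J_def
    by (rule nn_integral_eq_integral[OF intS]) (auto intro!: AE_I2 sum_nonneg nn)
  moreover have "(\<integral>t. (\<Sum>k\<in>E. g t k * \<bar>v t k\<bar> powr q) \<partial>?L) \<ge> 0"
    by (intro integral_nonneg_AE AE_I2) (auto intro!: sum_nonneg nn)
  ultimately show "Iq E q v g = ennreal ((\<integral>t. (\<Sum>k\<in>E. g t k * \<bar>v t k\<bar> powr q) \<partial>?L) powr (1/q))"
    unfolding Iq_def J_def[symmetric] Let_def by simp
qed


lemma Iq_finite_gv:
  assumes fin: "finite E" and adm: "admissible_vg E v g" and fI: "Iq E q v g \<noteq> \<infinity>"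
    and q: "q \<ge> 1" and k: "k \<in> E"
  shows "integrable (lebesgue_on {0..1}) (\<lambda>t. g t k * v t k)"
proof (rule Bochner_Integration.integrable_bound)
  let ?L = "lebesgue_on {0..1::real}"
  show "integrable ?L (\<lambda>t. g t k + g t k * \<bar>v t k\<bar> powr q)"
    using adm_g_integrable[OF fin adm k] Iq_finite(1)[OF fin adm fI k]
    by (rule Bochner_Integration.integrable_add)
  note [measurable] = adm_meas[OF adm k]
  show "(\<lambda>t. g t k * v t k) \<in> borel_measurable ?L" by measurable
  show "AE t in ?L. norm (g t k * v t k) \<le> norm (g t k + g t k * \<bar>v t k\<bar> powr q)"
  proof (rule AE_I2)
    fix t assume t: "t \<in> space ?L"
    have g0: "g t k \<ge> 0" using adm_g_bounds[OF fin adm k] t by simp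
    have "\<bar>v t k\<bar> \<le> 1 + \<bar>v t k\<bar> powr q"
    proof (cases "\<bar>v t k\<bar> \<le> 1")
      case True
      have "0 \<le> \<bar>v t k\<bar> powr q" by simp
      then show ?thesis using True by linarith
    next
      case False
      then have "\<bar>v t k\<bar> powr 1 \<le> \<bar>v t k\<bar> powr q" using q by (intro powr_mono) auto
      then show ?thesis using False by simp
    qed
    then have "g t k * \<bar>v t k\<bar> \<le> g t k * (1 + \<bar>v t k\<bar> powr q)"
      using g0 by (rule mult_left_mono)
    then show "norm (g t k * v t k) \<le> norm (g t k + g t k * \<bar>v t k\<bar> powr q)"
      using g0 by (simp add: abs_mult algebra_simps)
  qed
qed

lemma triple_flux:
  assumes fin: "finite E" and tr: "transport_triple V E tail head f v g"
    and int: "\<forall>k\<in>E. integrable (lebesgue_on {0..1}) (\<lambda>t. g t k * v t k)" and x: "x \<in> V"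
  shows "(\<Sum>k\<in>E. omega tail head x k * (\<integral>t. g t k * v t k \<partial>lebesgue_on {0..1})) = f 1 x - f 0 x"
proof -
  let ?L = "lebesgue_on {0..1::real}"
  define h where "h t = (\<Sum>k\<in>E. omega tail head x k * v t k * g t k)" for t
  have hint: "integrable ?L h"
    unfolding h_def using int
    by (intro Bochner_Integration.integrable_sum) (auto simp: mult.assoc mult.commute[of "v _ _"])
  have "f 1 x - f 0 x = (\<integral>t. h t \<partial>?L)"
  proof (rule ftc_ac[OF _ _ hint])
    show "abs_cont_on {0..1} (\<lambda>t. f t x)" using tr x unfolding transport_triple_def by auto
    have "AE t in ?L. \<forall>x\<in>V. ((\<lambda>s. f s x) has_real_derivative (\<Sum>k\<in>E. omega tail head x k * v t k * g t k)) (at t)"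
      using tr unfolding transport_triple_def by auto
    then show "AE t in ?L. ((\<lambda>s. f s x) has_real_derivative h t) (at t)"
      unfolding h_def by (rule eventually_mono) (use x in blast)
  qed
  also have "\<dots> = (\<Sum>k\<in>E. (\<integral>t. omega tail head x k * (g t k * v t k) \<partial>?L))"
    unfolding h_def using int
    by (subst Bochner_Integration.integral_sum) (auto simp: mult.assoc mult.commute[of "v _ _"])
  also have "\<dots> = (\<Sum>k\<in>E. omega tail head x k * (\<integral>t. g t k * v t k \<partial>?L))"
    by simp
  finally show ?thesis by simp
qed


lemma construct_triple:
  assumes finV: "finite V" and fin: "finite E" and q: "q \<ge> 1"
    and mu: "prob_vec V \<mu>" and nu: "prob_vec V \<nu>"
    and adm: "admissible_vg E v g"
    and int: "\<forall>k\<in>E. integrable (lebesgue_on {0..1}) (\<lambda>t. g t k * v t k)"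
    and flux: "\<forall>x\<in>V. (\<Sum>k\<in>E. omega tail head x k * (\<integral>t. g t k * v t k \<partial>lebesgue_on {0..1})) = \<nu> x - \<mu> x"
    and fI: "Iq E q v g \<noteq> \<infinity>"
  shows "\<exists>f v' g'. transport_triple V E tail head f v' g' \<and> (\<forall>x\<in>V. f 0 x = \<mu> x) \<and>
           (\<forall>x\<in>V. f 1 x = \<nu> x) \<and> Iq E q v' g' \<le> Iq E q v g"
proof -
  let ?L = "lebesgue_on {0..1::real}"
  define gb where "gb k = (\<integral>t. g t k \<partial>?L)" for k
  define m where "m k = (\<integral>t. g t k * v t k \<partial>?L)" for k
  define vb where "vb k = (if gb k = 0 then 0 else m k / gb k)" for k
  define f where "f t x = \<mu> x + t * (\<nu> x - \<mu> x)" for t x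
  have g0: "0 \<le> g t k" if "k \<in> E" "t \<in> {0..1}" for t k using adm_g_bounds[OF fin adm that] by simp
  have gint: "integrable ?L (\<lambda>t. g t k)" if "k \<in> E" for k using adm_g_integrable[OF fin adm that] .
  have gb0: "gb k \<ge> 0" if "k \<in> E" for k
    unfolding gb_def using g0[OF that] by (intro integral_nonneg_AE AE_I2) auto
  have sumgb: "(\<Sum>k\<in>E. gb k) = 1"
  proof -
    have "(\<Sum>k\<in>E. gb k) = (\<integral>t. (\<Sum>k\<in>E. g t k) \<partial>?L)"
      unfolding gb_def using gint by (subst Bochner_Integration.integral_sum) auto
    also have "\<dots> = (\<integral>t. 1 \<partial>?L)"
      using adm unfolding admissible_vg_def prob_vec_def by (intro Bochner_Integration.integral_cong) auto
    finally show ?thesis using L_measure by simp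
  qed
  have mvb: "m k = vb k * gb k" if k: "k \<in> E" for k
  proof (cases "gb k = 0")
    case True
    have "AE t in ?L. 0 \<le> g t k" using g0[OF k] by (intro AE_I2) auto
    then have "AE t in ?L. g t k = 0"
      using True integral_nonneg_eq_0_iff_AE[OF gint[OF k]] unfolding gb_def
      by blast
    then have "AE t in ?L. g t k * v t k = 0" by (rule eventually_mono) simp
    then have "m k = 0" unfolding m_def by (simp add: integral_eq_zero_AE)
    then show ?thesis using True by (simp add: vb_def)
  next
    case False then show ?thesis by (simp add: vb_def)
  qed
  have tr: "transport_triple V E tail head f (\<lambda>t. vb) (\<lambda>t. gb)"
    unfolding transport_triple_def
  proof (intro conjI ballI)
    fix x assume "x \<in> V"
    show "abs_cont_on {0..1} (\<lambda>t. f t x)" unfolding f_def by (rule abs_cont_linear)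
  next
    fix t :: real assume t: "t \<in> {0..1}"
    have "f t x = (1 - t) * \<mu> x + t * \<nu> x" for x unfolding f_def by (simp add: algebra_simps)
    moreover have "(\<Sum>x\<in>V. (1 - t) * \<mu> x + t * \<nu> x) = 1"
      using mu nu unfolding prob_vec_def by (simp add: sum.distrib sum_distrib_left[symmetric])
    moreover have "\<forall>x\<in>V. 0 \<le> (1 - t) * \<mu> x + t * \<nu> x"
      using mu nu t unfolding prob_vec_def by auto
    ultimately show "prob_vec V (f t)" unfolding prob_vec_def by simp
  next
    show "admissible_vg E (\<lambda>t. vb) (\<lambda>t. gb)"
      unfolding admissible_vg_def prob_vec_def using gb0 sumgb by auto
  next
    show "AE t in ?L. \<forall>x\<in>V. ((\<lambda>s. f s x) has_real_derivative (\<Sum>k\<in>E. omega tail head x k * vb k * gb k)) (at t)"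
    proof (rule AE_I2, rule ballI)
      fix t x assume "x \<in> V"
      then have "(\<Sum>k\<in>E. omega tail head x k * vb k * gb k) = \<nu> x - \<mu> x"
        using flux mvb by (auto simp: m_def[symmetric] mult.assoc intro!: sum.cong)
      moreover have "((\<lambda>s. f s x) has_real_derivative (\<nu> x - \<mu> x)) (at t)"
        unfolding f_def by (auto intro!: derivative_eq_intros)
      ultimately show "((\<lambda>s. f s x) has_real_derivative (\<Sum>k\<in>E. omega tail head x k * vb k * gb k)) (at t)"
        by simp
    qed
  qed
  have edge: "gb k * \<bar>vb k\<bar> powr q \<le> (\<integral>t. g t k * \<bar>v t k\<bar> powr q \<partial>?L)" if k: "k \<in> E" for k
  proof (cases "gb k = 0")
    case True
    have "0 \<le> (\<integral>t. g t k * \<bar>v t k\<bar> powr q \<partial>?L)"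
      using g0[OF k] by (intro integral_nonneg_AE AE_I2) auto
    then show ?thesis using True by simp
  next
    case False
    then have gpos: "gb k > 0" using gb0[OF k] by simp
    have igw: "integrable ?L (\<lambda>t. g t k * \<bar>v t k\<bar>)"
    proof -
      have "integrable ?L (\<lambda>t. \<bar>g t k * v t k\<bar>)" using int k by auto
      then show ?thesis
        by (rule Bochner_Integration.integrable_cong[THEN iffD1, rotated -1]) (auto simp: abs_mult g0[OF k])
    qed
    define M0 where "M0 = (\<integral>t. g t k * \<bar>v t k\<bar> \<partial>?L)"
    have mM: "\<bar>m k\<bar> \<le> M0"
    proof -
      have "\<bar>m k\<bar> \<le> (\<integral>t. \<bar>g t k * v t k\<bar> \<partial>?L)" unfolding m_def by (rule integral_abs_bound)
      also have "\<dots> = M0" unfolding M0_def by (intro Bochner_Integration.integral_cong) (auto simp: abs_mult g0[OF k])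
      finally show ?thesis .
    qed
    have "gb k * \<bar>vb k\<bar> powr q = gb k * (\<bar>m k\<bar> / gb k) powr q"
      using False gpos by (simp add: vb_def)
    also have "\<dots> \<le> gb k * (M0 / gb k) powr q"
      using gpos mM q by (intro mult_left_mono powr_mono2 divide_right_mono) auto
    also have "\<dots> \<le> (\<integral>t. g t k * \<bar>v t k\<bar> powr q \<partial>?L)"
      using jensen_edge[of ?L "\<lambda>t. g t k" "\<lambda>t. \<bar>v t k\<bar>" q] g0[OF k] gint[OF k] igw
        Iq_finite(1)[OF fin adm fI k] q gpos
      unfolding M0_def gb_def by auto
    finally show ?thesis .
  qed
  have "Iq E q (\<lambda>t. vb) (\<lambda>t. gb) = ennreal ((\<Sum>k\<in>E. gb k * \<bar>vb k\<bar> powr q) powr (1/q))"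
  proof -
    have "(\<Sum>k\<in>E. gb k * \<bar>vb k\<bar> powr q) \<ge> 0" using gb0 by (intro sum_nonneg) auto
    then show ?thesis unfolding Iq_def Let_def by (simp add: L_emeasure)
  qed
  also have "\<dots> \<le> ennreal ((\<integral>t. (\<Sum>k\<in>E. g t k * \<bar>v t k\<bar> powr q) \<partial>?L) powr (1/q))"
  proof (intro ennreal_leI powr_mono2)
    show "0 \<le> 1/q" using q by simp
    show "0 \<le> (\<Sum>k\<in>E. gb k * \<bar>vb k\<bar> powr q)" using gb0 by (intro sum_nonneg) auto
    have "(\<Sum>k\<in>E. gb k * \<bar>vb k\<bar> powr q) \<le> (\<Sum>k\<in>E. (\<integral>t. g t k * \<bar>v t k\<bar> powr q \<partial>?L))"
      using edge by (rule sum_mono)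
    also have "\<dots> = (\<integral>t. (\<Sum>k\<in>E. g t k * \<bar>v t k\<bar> powr q) \<partial>?L)"
      using Iq_finite(1)[OF fin adm fI] by (subst Bochner_Integration.integral_sum) auto
    finally show "(\<Sum>k\<in>E. gb k * \<bar>vb k\<bar> powr q) \<le> (\<integral>t. (\<Sum>k\<in>E. g t k * \<bar>v t k\<bar> powr q) \<partial>?L)" .
  qed
  also have "\<dots> = Iq E q v g" using Iq_finite(2)[OF fin adm fI] by simp
  finally have "Iq E q (\<lambda>t. vb) (\<lambda>t. gb) \<le> Iq E q v g" .
  moreover have "\<forall>x\<in>V. f 0 x = \<mu> x" "\<forall>x\<in>V. f 1 x = \<nu> x" unfolding f_def by auto
  ultimately show ?thesis using tr by blast
qed


theorem mainTheorem4:
  fixes V :: "'v set" and E :: "'e set" and tail head :: "'e \<Rightarrow> 'v"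
    and q :: real and \<mu> \<nu> :: "'v \<Rightarrow> real"
  assumes "finite V" and "finite E"
    and "\<forall>k\<in>E. tail k \<in> V \<and> head k \<in> V"
    and "graph_connected V E tail head"
    and "q \<ge> 1"
    and "prob_vec V \<mu>" and "prob_vec V \<nu>"
  shows "Vq V E tail head q \<mu> \<nu> =
    Inf {Iq E q v g | v g. admissible_vg E v g \<and>
           (\<forall>k\<in>E. integrable (lebesgue_on {0..1}) (\<lambda>t. g t k * v t k)) \<and>
           (\<forall>x\<in>V. (\<Sum>k\<in>E. omega tail head x k *
                     (\<integral>t. g t k * v t k \<partial>(lebesgue_on {0..1}))) = \<nu> x - \<mu> x)}"
  (is "_ = Inf ?S2")
proof -
  define S1 where "S1 = {Iq E q v g | f v g. transport_triple V E tail head f v g \<and>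
                              (\<forall>x\<in>V. f 0 x = \<mu> x) \<and> (\<forall>x\<in>V. f 1 x = \<nu> x)}"
  have Vq: "Vq V E tail head q \<mu> \<nu> = Inf S1" unfolding Vq_def S1_def by simp
  have "Inf S1 \<le> Inf ?S2"
  proof (rule Inf_greatest)
    fix y assume "y \<in> ?S2"
    then obtain v g where y: "y = Iq E q v g" and adm: "admissible_vg E v g"
      and int: "\<forall>k\<in>E. integrable (lebesgue_on {0..1}) (\<lambda>t. g t k * v t k)"
      and flux: "\<forall>x\<in>V. (\<Sum>k\<in>E. omega tail head x k * (\<integral>t. g t k * v t k \<partial>lebesgue_on {0..1})) = \<nu> x - \<mu> x"
      by blast
    show "Inf S1 \<le> y"
    proof (cases "y = \<infinity>")
      case True then show ?thesis by simp
    next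
      case False
      then obtain f v' g' where "transport_triple V E tail head f v' g'" "\<forall>x\<in>V. f 0 x = \<mu> x"
        "\<forall>x\<in>V. f 1 x = \<nu> x" and le: "Iq E q v' g' \<le> Iq E q v g"
        using construct_triple[OF assms(1,2,5,6,7) adm int flux] y by blast
      then have "Iq E q v' g' \<in> S1" unfolding S1_def by blast
      then show ?thesis using le y by (metis Inf_lower2)
    qed
  qed
  moreover have "Inf ?S2 \<le> Inf S1"
  proof (rule Inf_greatest)
    fix y assume "y \<in> S1"
    then obtain f v g where y: "y = Iq E q v g" and tr: "transport_triple V E tail head f v g"
      and f0: "\<forall>x\<in>V. f 0 x = \<mu> x" and f1: "\<forall>x\<in>V. f 1 x = \<nu> x"
      unfolding S1_def by blast
    show "Inf ?S2 \<le> y"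
    proof (cases "y = \<infinity>")
      case True then show ?thesis by simp
    next
      case False
      have adm: "admissible_vg E v g" using tr unfolding transport_triple_def by auto
      have int: "\<forall>k\<in>E. integrable (lebesgue_on {0..1}) (\<lambda>t. g t k * v t k)"
        using Iq_finite_gv[OF assms(2) adm _ assms(5)] False y by auto
      have "\<forall>x\<in>V. (\<Sum>k\<in>E. omega tail head x k * (\<integral>t. g t k * v t k \<partial>lebesgue_on {0..1})) = \<nu> x - \<mu> x"
        using triple_flux[OF assms(2) tr int] f0 f1 by auto
      then have "y \<in> ?S2" using y adm int by blast
      then show ?thesis by (rule Inf_lower)
    qed
  qed
  ultimately show ?thesis using Vq by simp
qed

end
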